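(* Let $C$ be a subscription subtask with worst-case response time $R_C$ that is the only subscriber of a topic, and let its parents $A, B, \dots$ (the subtasks publishing to that topic) have worst-case response times $R_A, R_B, \dots$. Suppose the task set containing $A, B, C, \dots$ is strictly periodic, the parents' periods are harmonic, and the phase shift is sufficient in the following sense: for each pair of parents $A, B$, $$t_{RA} + R_A + R_C \leq t_{RB}, \qquad t_{RB} + R_B + R_C \leq t_{RA} + T_A,$$ where $t_{Rx}$ denotes a release time of $x$, these occurring at the time points $\phi_x + kT_x$, $k \in \mathbb{N}$, with $\phi_x$ the phase and $T_x$ the period of $x$. Then the message queue for that subscription's topic never contains more than one message.
   Context: Setting: a ROS~2 application on a single processor in which subtasks (callbacks) communicate via publish-subscribe topics. Each execution of a parent publishes one message to the topic, which is enqueued in the subscription's message queue and releases one job of the subscription $C$ immediately when the parent completes; that message is removed from the queue when the corresponding job of $C$ is executed. The response time of a job is the time from its release to its completion; $R_x$ is an upper bound on the response time of jobs of $x$. *)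

theory Defs
  imports Complex_Main
begin

definition release_time :: "('p \<Rightarrow> real) \<Rightarrow> ('p \<Rightarrow> real) \<Rightarrow> 'p \<Rightarrow> nat \<Rightarrow> real" where
  "release_time phi T x k = phi x + real k * T x"

definition harmonic_periods :: "'p set \<Rightarrow> ('p \<Rightarrow> real) \<Rightarrow> bool" where
  "harmonic_periods P T \<longleftrightarrow>
     (\<forall>x\<in>P. \<forall>y\<in>P. (\<exists>n::nat. T y = real n * T x) \<or> (\<exists>n::nat. T x = real n * T y))"

definition sufficient_phase_shift ::
  "'p set \<Rightarrow> ('p \<Rightarrow> real) \<Rightarrow> ('p \<Rightarrow> real) \<Rightarrow> ('p \<Rightarrow> real) \<Rightarrow> real \<Rightarrow> bool" where
  "sufficient_phase_shift P phi T R RC \<longleftrightarrow>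
     (\<forall>A\<in>P. \<forall>B\<in>P. A \<noteq> B \<longrightarrow>
        (\<exists>i j. release_time phi T A i + R A + RC \<le> release_time phi T B j \<and>
               release_time phi T B j + R B + RC \<le> release_time phi T A i + T A))"

text \<open>Messages are identified by (parent, job index). The message of job k of parent x is
enqueued at the completion time fin x k of that job and removed at time rm x k (when the
corresponding job of C is executed).\<close>
definition msg_queue ::
  "'p set \<Rightarrow> ('p \<Rightarrow> nat \<Rightarrow> real) \<Rightarrow> ('p \<Rightarrow> nat \<Rightarrow> real) \<Rightarrow> real \<Rightarrow> ('p \<times> nat) set" where
  "msg_queue P fin rm t = {(x, k). x \<in> P \<and> fin x k \<le> t \<and> t < rm x k}"

end

theory Submission
  imports Defs
begin

lemma grid:
  fixes TA ai bj LA LB t :: real and p q :: int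
  assumes "TA > 0" "ai + LA \<le> bj" "bj + LB \<le> ai + TA"
    "ai + real_of_int p * TA \<le> t" "t < ai + real_of_int p * TA + LA"
    "bj + real_of_int q * TA \<le> t" "t < bj + real_of_int q * TA + LB"
  shows False
proof -
  have e: "real_of_int (p - q) * TA = real_of_int p * TA - real_of_int q * TA"
    by (simp add: algebra_simps)
  have h1: "0 < real_of_int (p - q) * TA" unfolding e using assms by linarith
  have h2: "real_of_int (p - q) * TA < TA" unfolding e using assms by linarith
  from h1 assms(1) have "p - q > 0" by (simp add: zero_less_mult_iff)
  hence "real_of_int (p - q) \<ge> 1" by simp
  hence "real_of_int (p - q) * TA \<ge> TA" using assms(1) by simp
  with h2 show False by simp
qed

lemma cross:
  fixes P :: "'p set"
    and phi T R :: "'p \<Rightarrow> real"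
    and RC :: real
    and fin rm :: "'p \<Rightarrow> nat \<Rightarrow> real"
  assumes periods_pos: "\<forall>x\<in>P. T x > 0"
    and resp_parent: "\<forall>x\<in>P. \<forall>k. release_time phi T x k \<le> fin x k \<and>
                                   fin x k \<le> release_time phi T x k + R x"
    and resp_C: "\<forall>x\<in>P. \<forall>k. fin x k \<le> rm x k \<and> rm x k \<le> fin x k + RC"
    and shift: "sufficient_phase_shift P phi T R RC"
    and xy: "x \<in> P" "y \<in> P" "x \<noteq> y" "T y = real n * T x"
    and t1: "fin x k \<le> t" "t < rm x k"
    and t2: "fin y l \<le> t" "t < rm y l"
  shows False
proof -
  obtain i j where ij: "release_time phi T x i + R x + RC \<le> release_time phi T y j"
     "release_time phi T y j + R y + RC \<le> release_time phi T x i + T x"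
    using shift xy unfolding sufficient_phase_shift_def by blast
  have Tx: "T x > 0" using periods_pos xy by auto
  have a: "release_time phi T x k = release_time phi T x i + real_of_int (int k - int i) * T x"
    unfolding release_time_def by (simp add: algebra_simps)
  have b: "release_time phi T y l = release_time phi T y j + real_of_int ((int l - int j) * int n) * T x"
    unfolding release_time_def using xy(4) by (simp add: algebra_simps)
  have ax: "release_time phi T x k \<le> t" "t < release_time phi T x k + (R x + RC)"
    proof -
    have "release_time phi T x k \<le> fin x k" "fin x k \<le> release_time phi T x k + R x"
         "rm x k \<le> fin x k + RC" using resp_parent resp_C xy by auto
    thus "release_time phi T x k \<le> t" "t < release_time phi T x k + (R x + RC)" using t1 by linarith+
  qed
  have by': "release_time phi T y l \<le> t" "t < release_time phi T y l + (R y + RC)"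
    proof -
    have "release_time phi T y l \<le> fin y l" "fin y l \<le> release_time phi T y l + R y"
         "rm y l \<le> fin y l + RC" using resp_parent resp_C xy by auto
    thus "release_time phi T y l \<le> t" "t < release_time phi T y l + (R y + RC)" using t2 by linarith+
  qed
  show False
    apply (rule grid[OF Tx ij(1)[unfolded add.assoc] ij(2)[unfolded add.assoc], of "int k - int i" t
          "(int l - int j) * int n"])
    using ax by' a b by (simp_all add: add.assoc)
qed

theorem lemma7:
  fixes P :: "'p set"
    and phi T R :: "'p \<Rightarrow> real"
    and RC :: real
    and fin rm :: "'p \<Rightarrow> nat \<Rightarrow> real"
  assumes parents: "finite P" "card P \<ge> 2"
    and periods_pos: "\<forall>x\<in>P. T x > 0"
    and resp_parent: "\<forall>x\<in>P. \<forall>k. release_time phi T x k \<le> fin x k \<and>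
                                   fin x k \<le> release_time phi T x k + R x"
    and resp_C: "\<forall>x\<in>P. \<forall>k. fin x k \<le> rm x k \<and> rm x k \<le> fin x k + RC"
    and harmonic: "harmonic_periods P T"
    and shift: "sufficient_phase_shift P phi T R RC"
  shows "\<forall>t. \<forall>m1\<in>msg_queue P fin rm t. \<forall>m2\<in>msg_queue P fin rm t. m1 = m2"
proof (intro allI ballI)
  fix t m1 m2
  assume m1: "m1 \<in> msg_queue P fin rm t" and m2: "m2 \<in> msg_queue P fin rm t"
  obtain x k where xk: "m1 = (x, k)" "x \<in> P" "fin x k \<le> t" "t < rm x k"
    using m1 unfolding msg_queue_def by auto
  obtain y l where yl: "m2 = (y, l)" "y \<in> P" "fin y l \<le> t" "t < rm y l"
    using m2 unfolding msg_queue_def by auto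
  show "m1 = m2"
  proof (cases "x = y")
    case True
    show ?thesis
    proof (rule ccontr)
      assume "m1 \<noteq> m2"
      with True xk yl have kl: "k \<noteq> l" by auto
      have "\<exists>z\<in>P. z \<noteq> x"
      proof (rule ccontr)
        assume "\<not> ?thesis"
        hence "P \<subseteq> {x}" by auto
        hence "card P \<le> card {x}" by (intro card_mono) simp_all
        hence "card P \<le> 1" by simp
        thus False using parents(2) by simp
      qed
      then obtain z where z: "z \<in> P" "z \<noteq> x" by blast
      obtain i j where ij: "release_time phi T x i + R x + RC \<le> release_time phi T z j"
         "release_time phi T z j + R z + RC \<le> release_time phi T x i + T x"
        using shift xk(2) z(1) z(2)[symmetric] unfolding sufficient_phase_shift_def by blast
      have "R z \<ge> 0"
      proof -
        have "release_time phi T z 0 \<le> fin z 0" "fin z 0 \<le> release_time phi T z 0 + R z"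
          using resp_parent z by auto
        thus ?thesis by linarith
      qed
      moreover have "RC \<ge> 0" proof -
        have "fin x 0 \<le> rm x 0" "rm x 0 \<le> fin x 0 + RC" using resp_C xk(2) by auto
        thus ?thesis by linarith
      qed
      ultimately have RT: "R x + RC \<le> T x" using ij by linarith
      have ax: "\<And>k. fin x k \<le> t \<Longrightarrow> t < rm x k \<Longrightarrow>
           release_time phi T x k \<le> t \<and> t < release_time phi T x k + (R x + RC)"
        proof -
        fix k assume "fin x k \<le> t" "t < rm x k"
        moreover have "release_time phi T x k \<le> fin x k" "fin x k \<le> release_time phi T x k + R x"
         "rm x k \<le> fin x k + RC" using resp_parent resp_C xk(2) by auto
        ultimately show "release_time phi T x k \<le> t \<and> t < release_time phi T x k + (R x + RC)" by linarith
      qed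
      have gen: "\<And>k l. k < l \<Longrightarrow> fin x k \<le> t \<Longrightarrow> t < rm x k \<Longrightarrow> fin x l \<le> t \<Longrightarrow> t < rm x l \<Longrightarrow> False"
      proof -
        fix k l :: nat
        assume "k < l" "fin x k \<le> t" "t < rm x k" "fin x l \<le> t" "t < rm x l"
        then have A: "t < release_time phi T x k + (R x + RC)" "release_time phi T x l \<le> t"
          using ax by auto
        have "real k + 1 \<le> real l" using \<open>k < l\<close> by simp
        hence "(real k + 1) * T x \<le> real l * T x"
          using periods_pos xk(2) by (simp add: mult_right_mono)
        hence "real k * T x + T x \<le> real l * T x" by (simp add: algebra_simps)
        thus False using A RT unfolding release_time_def by linarith
      qed
      from kl have "k < l \<or> l < k" by linarith
      thus False
      proof
        assume "k < l" thus False using gen xk(3,4) yl(3,4) True by blast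
      next
        assume "l < k" thus False using gen xk(3,4) yl(3,4) True by blast
      qed
    qed
  next
    case False
    from harmonic xk(2) yl(2) have "(\<exists>n::nat. T y = real n * T x) \<or> (\<exists>n::nat. T x = real n * T y)"
      unfolding harmonic_periods_def by blast
    then show ?thesis
    proof
      assume "\<exists>n::nat. T y = real n * T x"
      then obtain n where "T y = real n * T x" by blast
      from cross[OF periods_pos resp_parent resp_C shift xk(2) yl(2) False this xk(3,4) yl(3,4)]
      show ?thesis ..
    next
      assume "\<exists>n::nat. T x = real n * T y"
      then obtain n where "T x = real n * T y" by blast
      from cross[OF periods_pos resp_parent resp_C shift yl(2) xk(2) _ this yl(3,4) xk(3,4)] False
      show ?thesis by auto
    qed
  qed
qed

end
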